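(* The map $n\mapsto nXn^{-1}-X$ induces an isomorphism from $N_X\backslash N$ onto $\mathfrak{u}_X$.
   Context: Let $E/F$ be a quadratic extension of number fields with nontrivial automorphism $\sigma$. Let $r\ge1$ and $d_1,\dots,d_r\ge0$ be integers, and let $V_F$ be an $F$-vector space with basis $(e^i_{k,j})_{1\le i\le j\le r,\,1\le k\le d_j}$; $V=V_F\otimes_FE$, $V^i_j$ the $E$-span of $(e^i_{k,j})_k$, so $V=\bigoplus_{1\le i\le j\le r}V^i_j$. Let $\mathfrak{s}$ be the $F$-space of $\sigma$-linear endomorphisms of $V$ (i.e. $X(\lambda v)=\sigma(\lambda)X(v)$), and $H=\mathrm{Res}_{E/F}GL_E(V)$ acting on $\mathfrak{s}$ by conjugation. Let $X\in\mathfrak{s}$ be the $\sigma$-linear map with $Xe^i_{k,j}=e^{i-1}_{k,j}$ for $i>1$ and $Xe^1_{k,j}=0$; let $H_X$ be its centralizer in $H$. Let $\mathfrak{n}=\bigoplus\mathrm{Hom}_E(V^i_j,V^{i'}_{j'})$, sum over pairs with $i>i'$ or ($i=i'$ and $j<j'$), let $N$ be the unipotent $F$-subgroup of $H$ with Lie algebra $\mathfrak{n}$ (i.e. $N=1+\mathfrak{n}$), and $N_X=N\cap H_X$. Let $\mathfrak{u}_X$ be the set of $Y\in\mathfrak{s}$ whose block component from $V^i_j$ to $V^{i'}_{j'}$ is zero except when $1<i$ and ($i-1>i'$ or ($i=i'+1$ and $j<j'$)). All objects are viewed as $F$-varieties. *)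

theory Defs
  imports Main "HOL-Library.Product_Plus"
begin

(* Functor-of-points model.  F is a field of characteristic 0 (standing in for the
   number field), E = F(sqrt delta) with delta a non-square in F, and R is a
   commutative F-algebra (structure map iota).  Then E \<otimes>_F R = R[t]/(t^2 - iota delta);
   an element a + b t is represented by the pair (a,b), and sigma \<otimes> id is (a,b) \<mapsto> (a,-b).
   Below, c stands for iota delta. *)

type_synonym 'r ER = "'r \<times> 'r"

definition emul :: "'r::comm_ring_1 \<Rightarrow> 'r ER \<Rightarrow> 'r ER \<Rightarrow> 'r ER" where
  "emul c x y = (fst x * fst y + c * snd x * snd y, fst x * snd y + snd x * fst y)"

definition esig :: "'r::comm_ring_1 ER \<Rightarrow> 'r ER" where
  "esig x = (fst x, - snd x)"

definition eone :: "'r::comm_ring_1 ER" where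
  "eone = (1, 0)"

(* Basis index: (i,j,k) stands for e^i_{k,j}, with 1 <= i <= j <= r, 1 <= k <= d j. *)
definition Idx :: "nat \<Rightarrow> (nat \<Rightarrow> nat) \<Rightarrow> (nat \<times> nat \<times> nat) set" where
  "Idx r d = {(i,j,k). 1 \<le> i \<and> i \<le> j \<and> j \<le> r \<and> 1 \<le> k \<and> k \<le> d j}"

(* A matrix A over E\<otimes>R: entry A p q is the e_p-coefficient of the image of e_q.
   An E-linear map h has matrix h; a sigma-linear map Y has matrix A with Y v = A * sigma(v). *)
type_synonym 'r mat = "(nat \<times> nat \<times> nat) \<Rightarrow> (nat \<times> nat \<times> nat) \<Rightarrow> 'r ER"

definition supp_ok :: "nat \<Rightarrow> (nat \<Rightarrow> nat) \<Rightarrow> 'r::comm_ring_1 mat \<Rightarrow> bool" where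
  "supp_ok r d A = (\<forall>p q. (p \<notin> Idx r d \<or> q \<notin> Idx r d) \<longrightarrow> A p q = 0)"

definition mat_mul :: "nat \<Rightarrow> (nat \<Rightarrow> nat) \<Rightarrow> 'r::comm_ring_1 \<Rightarrow> 'r mat \<Rightarrow> 'r mat \<Rightarrow> 'r mat" where
  "mat_mul r d c A B = (\<lambda>p q. if p \<in> Idx r d \<and> q \<in> Idx r d
      then (\<Sum>m\<in>Idx r d. emul c (A p m) (B m q)) else 0)"

definition mat_one :: "nat \<Rightarrow> (nat \<Rightarrow> nat) \<Rightarrow> 'r::comm_ring_1 mat" where
  "mat_one r d = (\<lambda>p q. if p = q \<and> p \<in> Idx r d then eone else 0)"

definition mat_sig :: "'r::comm_ring_1 mat \<Rightarrow> 'r mat" where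
  "mat_sig A = (\<lambda>p q. esig (A p q))"

definition mat_minus :: "'r::comm_ring_1 mat \<Rightarrow> 'r mat \<Rightarrow> 'r mat" where
  "mat_minus A B = (\<lambda>p q. A p q - B p q)"

definition mat_inv :: "nat \<Rightarrow> (nat \<Rightarrow> nat) \<Rightarrow> 'r::comm_ring_1 \<Rightarrow> 'r mat \<Rightarrow> 'r mat" where
  "mat_inv r d c h = (SOME B. supp_ok r d B \<and> mat_mul r d c h B = mat_one r d
                                \<and> mat_mul r d c B h = mat_one r d)"

(* Conjugation of the sigma-linear map with matrix A by h \<in> GL(V):
   h o Y o h^{-1} has matrix h * A * sigma(h^{-1}). *)
definition conj :: "nat \<Rightarrow> (nat \<Rightarrow> nat) \<Rightarrow> 'r::comm_ring_1 \<Rightarrow> 'r mat \<Rightarrow> 'r mat \<Rightarrow> 'r mat" where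
  "conj r d c h A = mat_mul r d c (mat_mul r d c h A) (mat_sig (mat_inv r d c h))"

definition Xmat :: "nat \<Rightarrow> (nat \<Rightarrow> nat) \<Rightarrow> 'r::comm_ring_1 mat" where
  "Xmat r d = (\<lambda>p q. if p \<in> Idx r d \<and> q \<in> Idx r d \<and> fst q > 1
                        \<and> p = (fst q - 1, snd q) then eone else 0)"

(* block Hom(V^i_j, V^i'_j') lies in n : i > i' or (i = i' and j < j');
   q = source index, p = target index *)
definition n_block :: "nat \<times> nat \<times> nat \<Rightarrow> nat \<times> nat \<times> nat \<Rightarrow> bool" where
  "n_block q p = (case q of (i,j,_) \<Rightarrow> case p of (i',j',_) \<Rightarrow>
                     i > i' \<or> (i = i' \<and> j < j'))"

definition u_block :: "nat \<times> nat \<times> nat \<Rightarrow> nat \<times> nat \<times> nat \<Rightarrow> bool" where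
  "u_block q p = (case q of (i,j,_) \<Rightarrow> case p of (i',j',_) \<Rightarrow>
                     1 < i \<and> (i - 1 > i' \<or> (i = i' + 1 \<and> j < j')))"

definition N_pts :: "nat \<Rightarrow> (nat \<Rightarrow> nat) \<Rightarrow> 'r::comm_ring_1 mat set" where
  "N_pts r d = {n. supp_ok r d n \<and> (\<forall>p\<in>Idx r d. n p p = eone)
       \<and> (\<forall>p\<in>Idx r d. \<forall>q\<in>Idx r d. p \<noteq> q \<and> \<not> n_block q p \<longrightarrow> n p q = 0)}"

definition NX_pts :: "nat \<Rightarrow> (nat \<Rightarrow> nat) \<Rightarrow> 'r::comm_ring_1 \<Rightarrow> 'r mat set" where
  "NX_pts r d c = {n \<in> N_pts r d. conj r d c n (Xmat r d) = Xmat r d}"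

definition uX_pts :: "nat \<Rightarrow> (nat \<Rightarrow> nat) \<Rightarrow> 'r::comm_ring_1 mat set" where
  "uX_pts r d = {Y. supp_ok r d Y
       \<and> (\<forall>p\<in>Idx r d. \<forall>q\<in>Idx r d. \<not> u_block q p \<longrightarrow> Y p q = 0)}"

definition phi :: "nat \<Rightarrow> (nat \<Rightarrow> nat) \<Rightarrow> 'r::comm_ring_1 \<Rightarrow> 'r mat \<Rightarrow> 'r mat" where
  "phi r d c n = mat_minus (conj r d c n (Xmat r d)) (Xmat r d)"

end

theory Submission
  imports Defs
begin


lemma finite_Idx: "finite (Idx r d)"
proof -
  have "Idx r d \<subseteq> {..r} \<times> {..r} \<times> {..(\<Sum>j\<le>r. d j)}"
  proof
    fix x assume "x \<in> Idx r d"
    then obtain i j k where x: "x = (i,j,k)" "i \<le> j" "j \<le> r" "k \<le> d j" by (auto simp: Idx_def)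
    have "d j \<le> (\<Sum>j\<le>r. d j)" using x(3) by (intro member_le_sum) auto
    then show "x \<in> {..r} \<times> {..r} \<times> {..(\<Sum>j\<le>r. d j)}" using x by auto
  qed
  then show ?thesis by (rule finite_subset) auto
qed

lemma emul_assoc: "emul c (emul c x y) z = emul c x (emul c y z)"
  by (simp add: emul_def algebra_simps)
lemma emul_comm: "emul c x y = emul c y x"
  by (simp add: emul_def algebra_simps)
lemma emul_add_left: "emul c (x + y) z = emul c x z + emul c y z"
  by (simp add: emul_def algebra_simps)
lemma emul_add_right: "emul c z (x + y) = emul c z x + emul c z y"
  by (simp add: emul_def algebra_simps)
lemma emul_0_left[simp]: "emul c 0 x = 0"
  by (simp add: emul_def zero_prod_def)
lemma emul_0_right[simp]: "emul c x 0 = 0"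
  by (simp add: emul_def zero_prod_def)
lemma emul_one_left[simp]: "emul c eone x = x"
  by (simp add: emul_def eone_def)
lemma emul_one_right[simp]: "emul c x eone = x"
  by (simp add: emul_def eone_def)
lemma emul_uminus_right: "emul c x (- y) = - emul c x y"
  by (simp add: emul_def algebra_simps)
lemma emul_uminus_left: "emul c (- x) y = - emul c x y"
  by (simp add: emul_def algebra_simps)
lemma esig_emul: "esig (emul c x y) = emul c (esig x) (esig y)"
  by (simp add: emul_def esig_def algebra_simps)
lemma esig_0[simp]: "esig 0 = 0"
  by (simp add: esig_def zero_prod_def)
lemma esig_eone[simp]: "esig eone = eone"
  by (simp add: esig_def eone_def)
lemma esig_eq_0_iff[simp]: "(esig x = 0) = (x = 0)"
  by (cases x) (simp add: esig_def zero_prod_def)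
lemma eone_neq_0[simp]: "(eone::'r::comm_ring_1 ER) \<noteq> 0"
  by (simp add: eone_def zero_prod_def)
lemma esig_sum: "esig (\<Sum>x\<in>A. f x) = (\<Sum>x\<in>A. esig (f x))"
  by (simp add: esig_def fst_sum snd_sum sum_negf prod_eq_iff)
lemma emul_sum_right: "emul c x (\<Sum>i\<in>A. f i) = (\<Sum>i\<in>A. emul c x (f i))"
  by (simp add: emul_def fst_sum snd_sum prod_eq_iff sum_distrib_left sum.distrib algebra_simps)
lemma emul_sum_left: "emul c (\<Sum>i\<in>A. f i) x = (\<Sum>i\<in>A. emul c (f i) x)"
  using emul_sum_right[of c x f A] by (simp add: emul_comm)


lemma supp_mm: "supp_ok r d (mat_mul r d c A B)"
  by (simp add: supp_ok_def mat_mul_def)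
lemma supp_one: "supp_ok r d (mat_one r d)"
  by (simp add: supp_ok_def mat_one_def)
lemma supp_sig: "supp_ok r d A \<Longrightarrow> supp_ok r d (mat_sig A)"
  by (simp add: supp_ok_def mat_sig_def)
lemma supp_minus: "supp_ok r d A \<Longrightarrow> supp_ok r d B \<Longrightarrow> supp_ok r d (mat_minus A B)"
  by (simp add: supp_ok_def mat_minus_def)
lemma suppD: "supp_ok r d A \<Longrightarrow> p \<notin> Idx r d \<or> q \<notin> Idx r d \<Longrightarrow> A p q = 0"
  unfolding supp_ok_def by blast

lemma mm_assoc: "mat_mul r d c (mat_mul r d c A B) C = mat_mul r d c A (mat_mul r d c B C)"
proof (intro ext)
  fix p q
  show "mat_mul r d c (mat_mul r d c A B) C p q = mat_mul r d c A (mat_mul r d c B C) p q"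
  proof (cases "p \<in> Idx r d \<and> q \<in> Idx r d")
    case True
    have "mat_mul r d c (mat_mul r d c A B) C p q
        = (\<Sum>m\<in>Idx r d. \<Sum>l\<in>Idx r d. emul c (emul c (A p l) (B l m)) (C m q))"
      using True by (simp add: mat_mul_def emul_sum_left)
    also have "\<dots> = (\<Sum>l\<in>Idx r d. \<Sum>m\<in>Idx r d. emul c (A p l) (emul c (B l m) (C m q)))"
      by (subst sum.swap) (simp add: emul_assoc)
    also have "\<dots> = mat_mul r d c A (mat_mul r d c B C) p q"
      using True by (simp add: mat_mul_def emul_sum_right)
    finally show ?thesis .
  next
    case False then show ?thesis by (auto simp: mat_mul_def)
  qed
qed

lemma mm_one_left: assumes "supp_ok r d A" shows "mat_mul r d c (mat_one r d) A = A"
proof (intro ext)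
  fix p q
  show "mat_mul r d c (mat_one r d) A p q = A p q"
  proof (cases "p \<in> Idx r d \<and> q \<in> Idx r d")
    case True
    have "mat_mul r d c (mat_one r d) A p q = (\<Sum>m\<in>Idx r d. if m = p then A p q else 0)"
      using True by (auto simp: mat_mul_def mat_one_def intro!: sum.cong)
    also have "\<dots> = A p q" using True finite_Idx by (simp add: sum.delta')
    finally show ?thesis .
  next
    case False then show ?thesis using suppD[OF assms, of p q] by (auto simp: mat_mul_def)
  qed
qed

lemma mm_one_right: assumes "supp_ok r d A" shows "mat_mul r d c A (mat_one r d) = A"
proof (intro ext)
  fix p q
  show "mat_mul r d c A (mat_one r d) p q = A p q"
  proof (cases "p \<in> Idx r d \<and> q \<in> Idx r d")
    case True
    have "mat_mul r d c A (mat_one r d) p q = (\<Sum>m\<in>Idx r d. if m = q then A p q else 0)"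
      using True by (auto simp: mat_mul_def mat_one_def intro!: sum.cong)
    also have "\<dots> = A p q" using True finite_Idx by (simp add: sum.delta')
    finally show ?thesis .
  next
    case False then show ?thesis using suppD[OF assms, of p q] by (auto simp: mat_mul_def)
  qed
qed

lemma sig_mm: "mat_sig (mat_mul r d c A B) = mat_mul r d c (mat_sig A) (mat_sig B)"
  by (intro ext) (auto simp: mat_sig_def mat_mul_def esig_sum esig_emul)

lemma sig_one: "mat_sig (mat_one r d) = (mat_one r d :: 'r::comm_ring_1 mat)"
  by (intro ext) (auto simp: mat_sig_def mat_one_def)

lemma sig_sig: "mat_sig (mat_sig A) = A"
  by (simp add: mat_sig_def esig_def)

definition invp :: "nat \<Rightarrow> (nat \<Rightarrow> nat) \<Rightarrow> 'r::comm_ring_1 \<Rightarrow> 'r mat \<Rightarrow> 'r mat \<Rightarrow> bool" where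
  "invp r d c h g = (supp_ok r d g \<and> mat_mul r d c h g = mat_one r d \<and> mat_mul r d c g h = mat_one r d)"

lemma inv_unique:
  assumes "supp_ok r d g" "supp_ok r d g'" "mat_mul r d c h g = mat_one r d" "mat_mul r d c g' h = mat_one r d"
  shows "g' = g"
proof -
  have "g' = mat_mul r d c g' (mat_mul r d c h g)" using assms by (simp add: mm_one_right)
  also have "\<dots> = mat_mul r d c (mat_mul r d c g' h) g" by (simp add: mm_assoc)
  also have "\<dots> = g" using assms by (simp add: mm_one_left)
  finally show ?thesis .
qed

lemma mat_inv_eq: assumes "invp r d c h g" shows "mat_inv r d c h = g"
proof -
  have "\<exists>B. supp_ok r d B \<and> mat_mul r d c h B = mat_one r d \<and> mat_mul r d c B h = mat_one r d"
    using assms[unfolded invp_def] by blast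
  then have "invp r d c h (mat_inv r d c h)"
    unfolding mat_inv_def invp_def by (rule someI_ex)
  then show ?thesis using assms inv_unique unfolding invp_def by metis
qed


definition lt3 :: "nat \<times> nat \<times> nat \<Rightarrow> nat \<times> nat \<times> nat \<Rightarrow> bool" where
  "lt3 p q = (fst p < fst q \<or> (fst p = fst q \<and> fst (snd q) < fst (snd p)))"

lemma n_block_lt3: "n_block q p = lt3 p q"
  by (cases p; cases q) (auto simp: n_block_def lt3_def)

lemma u_block_lt3: "u_block q p = (1 < fst q \<and> lt3 p (fst q - 1, snd q))"
  by (cases p; cases q) (auto simp: u_block_def lt3_def)

lemma lt3_trans: "lt3 p q \<Longrightarrow> lt3 q s \<Longrightarrow> lt3 p s"
  by (auto simp: lt3_def)
lemma lt3_irrefl: "\<not> lt3 p p"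
  by (auto simp: lt3_def)

definition rk :: "nat \<Rightarrow> nat \<times> nat \<times> nat \<Rightarrow> nat" where
  "rk r p = fst p * (r+1) + (r - fst (snd p))"

lemma Idx_D: "p \<in> Idx r d \<Longrightarrow> 1 \<le> fst p \<and> fst p \<le> fst (snd p) \<and> fst (snd p) \<le> r"
  by (auto simp: Idx_def)

lemma lt3_rk: assumes "p \<in> Idx r d" "q \<in> Idx r d" "lt3 p q" shows "rk r p < rk r q"
proof -
  have a: "fst (snd p) \<le> r" "fst (snd q) \<le> r" using assms Idx_D by blast+
  show ?thesis
  proof (cases "fst p < fst q")
    case True
    then have "fst p * (r+1) + (r+1) \<le> fst q * (r+1)"
      by (metis Suc_leI add.commute mult_Suc mult_le_mono1 plus_1_eq_Suc)
    then show ?thesis unfolding rk_def by linarith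
  next
    case False
    then show ?thesis using assms(3) a unfolding rk_def lt3_def by auto
  qed
qed

lemma rk_lt3: assumes "p \<in> Idx r d" "q \<in> Idx r d" "rk r p < rk r q" shows "lt3 p q"
proof (rule ccontr)
  assume "\<not> lt3 p q"
  then have disj: "fst q < fst p \<or> (fst p = fst q \<and> fst (snd p) \<le> fst (snd q))" unfolding lt3_def by auto
  have a: "fst (snd p) \<le> r" "fst (snd q) \<le> r" using assms Idx_D by blast+
  from disj show False
  proof (elim disjE)
    assume "fst q < fst p"
    then have "fst q * (r+1) + (r+1) \<le> fst p * (r+1)"
      by (metis Suc_leI add.commute mult_Suc mult_le_mono1 plus_1_eq_Suc)
    then show False using assms(3) unfolding rk_def by linarith
  next
    assume "fst p = fst q \<and> fst (snd p) \<le> fst (snd q)"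
    then show False using assms(3) a unfolding rk_def by auto
  qed
qed

lemma rk_bound: assumes "p \<in> Idx r d" shows "rk r p < (r+1)*(r+1)"
proof -
  have "fst p \<le> r" using Idx_D[OF assms] by linarith
  then have "fst p * (r+1) \<le> r * (r+1)" by (rule mult_le_mono1)
  moreover have "(r+1)*(r+1) = r*(r+1) + r + 1" by simp
  ultimately show ?thesis unfolding rk_def by linarith
qed

lemma N_entry: assumes "n \<in> N_pts r d" "n p q \<noteq> 0"
  shows "p \<in> Idx r d \<and> q \<in> Idx r d \<and> (p = q \<or> lt3 p q)"
proof -
  have s: "supp_ok r d n" using assms(1) by (simp add: N_pts_def)
  have pq: "p \<in> Idx r d" "q \<in> Idx r d" using suppD[OF s, of p q] assms(2) by auto
  then show ?thesis using assms unfolding N_pts_def n_block_lt3 by auto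
qed

lemma N_diag: "n \<in> N_pts r d \<Longrightarrow> p \<in> Idx r d \<Longrightarrow> n p p = eone"
  by (simp add: N_pts_def)

lemma N_supp: "n \<in> N_pts r d \<Longrightarrow> supp_ok r d n"
  by (simp add: N_pts_def)

lemma N_intro:
  assumes "supp_ok r d n" "\<And>p. p \<in> Idx r d \<Longrightarrow> n p p = eone"
    "\<And>p q. p \<in> Idx r d \<Longrightarrow> q \<in> Idx r d \<Longrightarrow> n p q \<noteq> 0 \<Longrightarrow> p = q \<or> lt3 p q"
  shows "n \<in> N_pts r d"
  unfolding N_pts_def n_block_lt3 mem_Collect_eq using assms by blast

lemma sum_nonzero_ex: "(\<Sum>x\<in>A. f x) \<noteq> (0::'a::comm_monoid_add) \<Longrightarrow> \<exists>x\<in>A. f x \<noteq> 0"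
  using sum.not_neutral_contains_not_neutral by blast

lemma N_mul: assumes "n \<in> N_pts r d" "n' \<in> N_pts r d" shows "mat_mul r d c n n' \<in> N_pts r d"
proof (rule N_intro)
  show "supp_ok r d (mat_mul r d c n n')" by (rule supp_mm)
next
  fix p assume p: "p \<in> Idx r d"
  have "mat_mul r d c n n' p p = (\<Sum>m\<in>Idx r d. if m = p then eone else 0)"
    unfolding mat_mul_def using p
  proof (simp, intro sum.cong)
    fix m assume m: "m \<in> Idx r d"
    show "emul c (n p m) (n' m p) = (if m = p then eone else 0)"
    proof (cases "m = p")
      case True then show ?thesis using assms p by (simp add: N_diag)
    next
      case False
      have "n p m = 0 \<or> n' m p = 0"
        using N_entry[OF assms(1), of p m] N_entry[OF assms(2), of m p] False lt3_trans lt3_irrefl by blast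
      then show ?thesis using False by auto
    qed
  qed simp
  also have "\<dots> = eone" using p finite_Idx by (simp add: sum.delta')
  finally show "mat_mul r d c n n' p p = eone" .
next
  fix p q assume pq: "p \<in> Idx r d" "q \<in> Idx r d" "mat_mul r d c n n' p q \<noteq> 0"
  then obtain m where "m \<in> Idx r d" "emul c (n p m) (n' m q) \<noteq> 0"
    unfolding mat_mul_def by (auto dest: sum_nonzero_ex)
  then have "n p m \<noteq> 0" "n' m q \<noteq> 0" by auto
  then show "p = q \<or> lt3 p q"
    using N_entry[OF assms(1), of p m] N_entry[OF assms(2), of m q] lt3_trans by blast
qed


definition esg :: "nat \<Rightarrow> 'r::comm_ring_1 ER \<Rightarrow> 'r ER" where
  "esg t x = (if even t then x else - x)"

definition nuof :: "'r::comm_ring_1 mat \<Rightarrow> 'r mat" where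
  "nuof n = (\<lambda>p q. if p = q then 0 else n p q)"

definition Pw :: "nat \<Rightarrow> (nat \<Rightarrow> nat) \<Rightarrow> 'r::comm_ring_1 \<Rightarrow> 'r mat \<Rightarrow> nat \<Rightarrow> 'r mat" where
  "Pw r d c n t = ((mat_mul r d c (nuof n)) ^^ t) (mat_one r d)"

lemma Pw_0: "Pw r d c n 0 = mat_one r d" by (simp add: Pw_def)
lemma Pw_Suc: "Pw r d c n (Suc t) = mat_mul r d c (nuof n) (Pw r d c n t)" by (simp add: Pw_def)
lemma supp_Pw: "supp_ok r d (Pw r d c n t)"
  by (cases t) (simp_all add: Pw_0 Pw_Suc supp_one supp_mm)

lemma Pw_shape: assumes "n \<in> N_pts r d" "Pw r d c n t p q \<noteq> 0"
  shows "p \<in> Idx r d \<and> q \<in> Idx r d \<and> (t = 0 \<longrightarrow> p = q) \<and> rk r p + t \<le> rk r q"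
  using assms(2)
proof (induction t arbitrary: p)
  case 0
  then show ?case by (auto simp: Pw_0 mat_one_def split: if_splits)
next
  case (Suc t)
  then have pq: "p \<in> Idx r d" "q \<in> Idx r d" by (auto simp: Pw_Suc mat_mul_def split: if_splits)
  then obtain m where m: "m \<in> Idx r d" "emul c (nuof n p m) (Pw r d c n t m q) \<noteq> 0"
    using Suc.prems by (auto simp: Pw_Suc mat_mul_def dest: sum_nonzero_ex)
  then have a: "nuof n p m \<noteq> 0" and b: "Pw r d c n t m q \<noteq> 0" by auto
  from a have "p \<noteq> m" "n p m \<noteq> 0" by (auto simp: nuof_def split: if_splits)
  then have "lt3 p m" using N_entry[OF assms(1)] by blast
  then have "rk r p < rk r m" using lt3_rk pq m by blast
  moreover have "rk r m + t \<le> rk r q" using Suc.IH[OF b] by blast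
  ultimately show ?case using pq by simp
qed

lemma Pw_nil: assumes "n \<in> N_pts r d" shows "Pw r d c n ((r+1)*(r+1)) = (\<lambda>p q. 0)"
proof (intro ext, rule ccontr)
  fix p q assume "Pw r d c n ((r+1)*(r+1)) p q \<noteq> 0"
  from Pw_shape[OF assms this] rk_bound[of q r d] show False by auto
qed

lemma esg_eq_0_iff[simp]: "(esg t x = 0) = (x = 0)"
  by (cases x) (auto simp: esg_def zero_prod_def)

lemma esg_emul: "emul c x (esg t y) = esg t (emul c x y)"
  by (simp add: esg_def emul_uminus_right)
lemma esg_sum: "esg t (\<Sum>i\<in>A. f i) = (\<Sum>i\<in>A. esg t (f i))"
  by (simp add: esg_def sum_negf)
lemma esg_add: "esg t (x + y) = esg t x - esg (Suc t) y"
  by (simp add: esg_def)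

definition Kb :: "nat \<Rightarrow> nat" where "Kb r = (r+1)*(r+1)"

definition Sinv :: "nat \<Rightarrow> (nat \<Rightarrow> nat) \<Rightarrow> 'r::comm_ring_1 \<Rightarrow> 'r mat \<Rightarrow> 'r mat" where
  "Sinv r d c n = (\<lambda>p q. \<Sum>t<Kb r. esg t (Pw r d c n t p q))"

lemma n_split: assumes "n \<in> N_pts r d"
  shows "n p m = mat_one r d p m + nuof n p m"
proof (cases "p = m")
  case True
  then show ?thesis using N_diag[OF assms, of p] suppD[OF N_supp[OF assms], of p p]
    by (auto simp: mat_one_def nuof_def)
next
  case False then show ?thesis by (simp add: mat_one_def nuof_def)
qed

lemma Sinv_right: assumes "n \<in> N_pts r d"
  shows "mat_mul r d c n (Sinv r d c n) = mat_one r d"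
proof (intro ext)
  fix p q
  define K where "K = Kb r"
  show "mat_mul r d c n (Sinv r d c n) p q = mat_one r d p q"
  proof (cases "p \<in> Idx r d \<and> q \<in> Idx r d")
    case False then show ?thesis by (auto simp: mat_mul_def mat_one_def)
  next
    case True
    have step: "mat_mul r d c n (Pw r d c n t) p q = Pw r d c n t p q + Pw r d c n (Suc t) p q" for t
    proof -
      have "mat_mul r d c n (Pw r d c n t) p q
          = (\<Sum>m\<in>Idx r d. emul c (mat_one r d p m) (Pw r d c n t m q))
            + (\<Sum>m\<in>Idx r d. emul c (nuof n p m) (Pw r d c n t m q))"
        using True by (simp add: mat_mul_def n_split[OF assms] emul_add_left sum.distrib)
      also have "\<dots> = mat_mul r d c (mat_one r d) (Pw r d c n t) p q + Pw r d c n (Suc t) p q"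
        using True by (simp add: mat_mul_def Pw_Suc)
      also have "\<dots> = Pw r d c n t p q + Pw r d c n (Suc t) p q"
        by (simp add: mm_one_left supp_Pw)
      finally show ?thesis .
    qed
    have "mat_mul r d c n (Sinv r d c n) p q
        = (\<Sum>m\<in>Idx r d. \<Sum>t<K. esg t (emul c (n p m) (Pw r d c n t m q)))"
      using True by (simp add: mat_mul_def Sinv_def K_def emul_sum_right esg_emul)
    also have "\<dots> = (\<Sum>t<K. esg t (\<Sum>m\<in>Idx r d. emul c (n p m) (Pw r d c n t m q)))"
      by (subst sum.swap) (simp add: esg_sum)
    also have "\<dots> = (\<Sum>t<K. esg t (Pw r d c n t p q) - esg (Suc t) (Pw r d c n (Suc t) p q))"
      using True step by (simp add: mat_mul_def esg_add)
    also have "\<dots> = esg 0 (Pw r d c n 0 p q) - esg K (Pw r d c n K p q)"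
      by (rule sum_lessThan_telescope')
    also have "\<dots> = mat_one r d p q"
      using Pw_nil[OF assms] by (simp add: K_def Kb_def Pw_0 esg_def)
    finally show ?thesis .
  qed
qed

lemma Sinv_N: assumes "n \<in> N_pts r d" shows "Sinv r d c n \<in> N_pts r d"
proof (rule N_intro)
  show "supp_ok r d (Sinv r d c n)"
    unfolding supp_ok_def Sinv_def
  proof (intro allI impI)
    fix p q :: "nat \<times> nat \<times> nat" assume h: "p \<notin> Idx r d \<or> q \<notin> Idx r d"
    show "(\<Sum>t<Kb r. esg t (Pw r d c n t p q)) = 0" using suppD[OF supp_Pw[of r d c n] h] by (auto simp: esg_def intro!: sum.neutral)
  qed
next
  fix p assume p: "p \<in> Idx r d"
  have "Sinv r d c n p p = (\<Sum>t<Kb r. if t = 0 then eone else 0)"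
    unfolding Sinv_def
  proof (intro sum.cong refl)
    fix t
    show "esg t (Pw r d c n t p p) = (if t = 0 then eone else 0)"
    proof (cases t)
      case 0 then show ?thesis using p by (simp add: Pw_0 mat_one_def esg_def)
    next
      case (Suc t')
      have "Pw r d c n t p p = 0" using Pw_shape[OF assms, where c=c and t=t and p=p and q=p] Suc by auto
      then show ?thesis using Suc by (simp add: esg_def)
    qed
  qed
  also have "\<dots> = eone" by (simp add: sum.delta' Kb_def)
  finally show "Sinv r d c n p p = eone" .
next
  fix p q assume pq: "p \<in> Idx r d" "q \<in> Idx r d" "Sinv r d c n p q \<noteq> 0"
  then obtain t where "esg t (Pw r d c n t p q) \<noteq> 0" unfolding Sinv_def by (auto dest: sum_nonzero_ex)
  then have "Pw r d c n t p q \<noteq> 0" by simp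
  from Pw_shape[OF assms this] show "p = q \<or> lt3 p q"
    using rk_lt3[OF pq(1,2)] by (cases t) auto
qed

lemma N_inv: assumes "n \<in> N_pts r d"
  shows "invp r d c n (mat_inv r d c n) \<and> mat_inv r d c n \<in> N_pts r d"
proof -
  define S where "S = Sinv r d c n"
  define S' where "S' = Sinv r d c S"
  have S: "S \<in> N_pts r d" "mat_mul r d c n S = mat_one r d"
    using Sinv_N[OF assms] Sinv_right[OF assms] by (simp_all add: S_def)
  have S': "mat_mul r d c S S' = mat_one r d" using Sinv_right[OF S(1)] by (simp add: S'_def)
  have "n = mat_mul r d c n (mat_mul r d c S S')" using S' N_supp[OF assms] by (simp add: mm_one_right)
  also have "\<dots> = S'" by (simp add: mm_assoc[symmetric] S(2) mm_one_left S'_def supp_mm Sinv_N[OF S(1), THEN N_supp])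
  finally have "mat_mul r d c S n = mat_one r d" using S' by simp
  then have "invp r d c n S" using S N_supp unfolding invp_def by blast
  then show ?thesis using mat_inv_eq S(1) by metis
qed


lemma supp_X: "supp_ok r d (Xmat r d)"
  by (simp add: supp_ok_def Xmat_def)

lemma lminus_Idx: "l \<in> Idx r d \<Longrightarrow> 1 < fst l \<Longrightarrow> (fst l - 1, snd l) \<in> Idx r d"
  by (cases l) (auto simp: Idx_def)

lemma mmX: assumes "p \<in> Idx r d" "l \<in> Idx r d"
  shows "mat_mul r d c n (Xmat r d) p l = (if 1 < fst l then n p (fst l - 1, snd l) else 0)"
proof -
  have "mat_mul r d c n (Xmat r d) p l
      = (\<Sum>m\<in>Idx r d. if m = (fst l - 1, snd l) \<and> 1 < fst l then n p (fst l - 1, snd l) else 0)"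
    using assms by (auto simp: mat_mul_def Xmat_def intro!: sum.cong)
  also have "\<dots> = (if 1 < fst l then n p (fst l - 1, snd l) else 0)"
    using lminus_Idx[OF assms(2)] finite_Idx by (cases "1 < fst l") (simp_all add: sum.delta')
  finally show ?thesis .
qed

lemma conj_eq: "invp r d c h g \<Longrightarrow> conj r d c h A = mat_mul r d c (mat_mul r d c h A) (mat_sig g)"
  by (simp add: conj_def mat_inv_eq)

lemma lt3_shift: "lt3 l q \<Longrightarrow> 1 < fst l \<Longrightarrow> lt3 (fst l - 1, snd l) (fst q - 1, snd q)"
  by (auto simp: lt3_def)

lemma part1: assumes n: "n \<in> N_pts r d" shows "phi r d c n \<in> uX_pts r d"
proof -
  define g where "g = mat_inv r d c n"
  have g: "invp r d c n g" "g \<in> N_pts r d" using N_inv[OF n] by (simp_all add: g_def)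
  have key: "conj r d c n (Xmat r d) p q = Xmat r d p q"
    if pq: "p \<in> Idx r d" "q \<in> Idx r d" and nu: "\<not> u_block q p" for p q
  proof -
    have nu': "\<not> (1 < fst q \<and> lt3 p (fst q - 1, snd q))" using nu by (simp add: u_block_lt3)
    have "conj r d c n (Xmat r d) p q
        = (\<Sum>l\<in>Idx r d. emul c (mat_mul r d c n (Xmat r d) p l) (esig (g l q)))"
      using pq by (simp add: conj_eq[OF g(1)] mat_mul_def mat_sig_def)
    also have "\<dots> = (\<Sum>l\<in>Idx r d. if l = q then Xmat r d p q else 0)"
    proof (intro sum.cong refl)
      fix l assume l: "l \<in> Idx r d"
      show "emul c (mat_mul r d c n (Xmat r d) p l) (esig (g l q)) = (if l = q then Xmat r d p q else 0)"
      proof (cases "l = q")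
        case True
        have mq: "mat_mul r d c n (Xmat r d) p q = (if 1 < fst q then n p (fst q - 1, snd q) else 0)"
          by (rule mmX[OF pq])
        have "mat_mul r d c n (Xmat r d) p q = Xmat r d p q"
        proof (cases "1 < fst q")
          case True
          show ?thesis
          proof (cases "p = (fst q - 1, snd q)")
            case True
            then show ?thesis using \<open>1 < fst q\<close> pq N_diag[OF n] using mq by (simp add: Xmat_def)
          next
            case False
            have "n p (fst q - 1, snd q) = 0" using N_entry[OF n, of p "(fst q - 1, snd q)"] False nu' True by auto
            then show ?thesis using True False pq using mq by (simp add: Xmat_def)
          qed
        next
          case False then show ?thesis using pq using mq by (simp add: Xmat_def)
        qed
        then show ?thesis using True N_diag[OF g(2) pq(2)] by simp
      next
        case False
        have "mat_mul r d c n (Xmat r d) p l = 0 \<or> g l q = 0"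
        proof (rule ccontr)
          assume "\<not> ?thesis"
          then have a: "mat_mul r d c n (Xmat r d) p l \<noteq> 0" and b: "g l q \<noteq> 0" by auto
          from b have "lt3 l q" using N_entry[OF g(2)] False by blast
          from a have l1: "1 < fst l" and "n p (fst l - 1, snd l) \<noteq> 0" using mmX[OF pq(1) l, of c n] by (auto split: if_splits)
          then have "p = (fst l - 1, snd l) \<or> lt3 p (fst l - 1, snd l)" using N_entry[OF n] by blast
          moreover have "lt3 (fst l - 1, snd l) (fst q - 1, snd q)" using lt3_shift[OF \<open>lt3 l q\<close> l1] .
          ultimately have "lt3 p (fst q - 1, snd q)" using lt3_trans by metis
          moreover have "1 < fst q" using \<open>lt3 l q\<close> l1 by (auto simp: lt3_def)
          ultimately show False using nu' by blast
        qed
        then show ?thesis using False by auto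
      qed
    qed
    also have "\<dots> = Xmat r d p q" using pq(2) finite_Idx by (simp add: sum.delta')
    finally show ?thesis .
  qed
  have "supp_ok r d (phi r d c n)" unfolding phi_def conj_def by (intro supp_minus supp_mm supp_X)
  moreover have "\<forall>p\<in>Idx r d. \<forall>q\<in>Idx r d. \<not> u_block q p \<longrightarrow> phi r d c n p q = 0"
    using key by (simp add: phi_def mat_minus_def)
  ultimately show ?thesis by (simp add: uX_pts_def)
qed

lemma invp_mul: assumes "invp r d c a a'" "invp r d c b b'" "supp_ok r d a" "supp_ok r d b"
  shows "invp r d c (mat_mul r d c a b) (mat_mul r d c b' a')"
proof -
  have 1: "mat_mul r d c (mat_mul r d c a b) (mat_mul r d c b' a') = mat_one r d"
    using assms unfolding invp_def
    by (metis mm_assoc mm_one_left supp_mm)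
  have 2: "mat_mul r d c (mat_mul r d c b' a') (mat_mul r d c a b) = mat_one r d"
    using assms unfolding invp_def
    by (metis mm_assoc mm_one_left supp_mm)
  show ?thesis using 1 2 supp_mm unfolding invp_def by blast
qed

lemma phi_eq_iff: "(phi r d c n = phi r d c n') = (conj r d c n (Xmat r d) = conj r d c n' (Xmat r d))"
proof
  assume h: "phi r d c n = phi r d c n'"
  show "conj r d c n (Xmat r d) = conj r d c n' (Xmat r d)"
  proof (intro ext)
    fix p q
    have "phi r d c n p q = phi r d c n' p q" using h by simp
    then show "conj r d c n (Xmat r d) p q = conj r d c n' (Xmat r d) p q"
      by (simp add: phi_def mat_minus_def)
  qed
qed (simp add: phi_def)

lemma part3: assumes n: "n \<in> N_pts r d" and n': "n' \<in> N_pts r d"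
  shows "(phi r d c n = phi r d c n') = (\<exists>m\<in>NX_pts r d c. n' = mat_mul r d c n m)"
proof -
  define X where "X = (Xmat r d :: 'a mat)"
  have sX: "supp_ok r d X" by (simp add: X_def supp_X)
  define g where "g = mat_inv r d c n"
  have g: "invp r d c n g" "g \<in> N_pts r d" using N_inv[OF n] by (simp_all add: g_def)
  define g' where "g' = mat_inv r d c n'"
  have g': "invp r d c n' g'" "g' \<in> N_pts r d" using N_inv[OF n'] by (simp_all add: g'_def)
  note mm = mat_mul_def
  let ?m = "mat_mul r d c"
  show ?thesis unfolding phi_eq_iff X_def[symmetric]
  proof
    assume h: "conj r d c n X = conj r d c n' X"
    define m where "m = ?m g n'"
    have mN: "m \<in> N_pts r d" using N_mul[OF g(2) n'] by (simp add: m_def)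
    have "?m n m = ?m (?m n g) n'" by (simp add: m_def mm_assoc)
    also have "\<dots> = n'" using g(1) N_supp[OF n'] by (simp add: invp_def mm_one_left)
    finally have nm: "n' = ?m n m" by simp
    have im: "invp r d c m (?m g' n)"
      unfolding m_def by (rule invp_mul) (use g g' n n' in \<open>auto simp: invp_def intro: N_supp\<close>)
    have "conj r d c m X = ?m (?m g (?m (?m n' X) (mat_sig g'))) (mat_sig n)"
      unfolding conj_eq[OF im] by (simp add: m_def sig_mm mm_assoc)
    also have "\<dots> = ?m (?m g (?m (?m n X) (mat_sig g))) (mat_sig n)"
      using h by (simp add: conj_eq[OF g(1)] conj_eq[OF g'(1)])
    also have "\<dots> = ?m (?m (?m g n) X) (mat_sig (?m g n))"
      by (simp add: sig_mm mm_assoc)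
    also have "\<dots> = X" using g(1) sX by (simp add: invp_def sig_one mm_one_left mm_one_right)
    finally have "conj r d c m X = X" .
    then have "m \<in> NX_pts r d c" using mN by (simp add: NX_pts_def X_def)
    then show "\<exists>m\<in>NX_pts r d c. n' = ?m n m" using nm by blast
  next
    assume "\<exists>m\<in>NX_pts r d c. n' = ?m n m"
    then obtain m where m: "m \<in> NX_pts r d c" "n' = ?m n m" by blast
    have mN: "m \<in> N_pts r d" and mX: "conj r d c m X = X" using m(1) by (simp_all add: NX_pts_def X_def)
    define gm where "gm = mat_inv r d c m"
    have gm: "invp r d c m gm" using N_inv[OF mN] by (simp add: gm_def)
    have i: "invp r d c n' (?m gm g)"
      unfolding m(2) by (rule invp_mul) (use g gm n mN in \<open>auto simp: invp_def intro: N_supp\<close>)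
    have "conj r d c n' X = ?m (?m n (?m (?m m X) (mat_sig gm))) (mat_sig g)"
      unfolding conj_eq[OF i] by (simp add: m(2) sig_mm mm_assoc)
    also have "\<dots> = conj r d c n X" using mX by (simp add: conj_eq[OF gm] conj_eq[OF g(1)] mm_assoc)
    finally show "conj r d c n X = conj r d c n' X" by simp
  qed
qed


definition Zm :: "nat \<Rightarrow> (nat \<Rightarrow> nat) \<Rightarrow> 'r::comm_ring_1 mat \<Rightarrow> 'r mat" where
  "Zm r d Y = (\<lambda>p q. Xmat r d p q + Y p q)"

definition zap :: "nat \<Rightarrow> (nat \<Rightarrow> nat) \<Rightarrow> 'r::comm_ring_1 \<Rightarrow> 'r mat \<Rightarrow>
    (nat \<times> nat \<times> nat \<Rightarrow> 'r ER) \<Rightarrow> (nat \<times> nat \<times> nat \<Rightarrow> 'r ER)" where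
  "zap r d c Z v = (\<lambda>p. if p \<in> Idx r d then \<Sum>m\<in>Idx r d. emul c (Z p m) (esig (v m)) else 0)"

definition fv :: "nat \<Rightarrow> (nat \<Rightarrow> nat) \<Rightarrow> 'r::comm_ring_1 \<Rightarrow> 'r mat \<Rightarrow> nat \<Rightarrow> nat \<times> nat \<Rightarrow>
    (nat \<times> nat \<times> nat \<Rightarrow> 'r ER)" where
  "fv r d c Y s jk = (zap r d c (Zm r d Y) ^^ s) (\<lambda>p. if p = (fst jk, jk) then eone else 0)"

definition nn :: "nat \<Rightarrow> (nat \<Rightarrow> nat) \<Rightarrow> 'r::comm_ring_1 \<Rightarrow> 'r mat \<Rightarrow> 'r mat" where
  "nn r d c Y = (\<lambda>p q. if q \<in> Idx r d then fv r d c Y (fst (snd q) - fst q) (snd q) p else 0)"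

lemma fv_0: "fv r d c Y 0 jk = (\<lambda>p. if p = (fst jk, jk) then eone else 0)"
  by (simp add: fv_def)
lemma fv_Suc: "fv r d c Y (Suc s) jk = zap r d c (Zm r d Y) (fv r d c Y s jk)"
  by (simp add: fv_def)

lemma Xsum: assumes "p \<in> Idx r d"
  shows "(\<Sum>m\<in>Idx r d. emul c (Xmat r d p m) (w m))
        = (if (fst p + 1, snd p) \<in> Idx r d then w (fst p + 1, snd p) else 0)"
proof -
  have "(\<Sum>m\<in>Idx r d. emul c (Xmat r d p m) (w m))
      = (\<Sum>m\<in>Idx r d. if m = (fst p + 1, snd p) then w (fst p + 1, snd p) else 0)"
  proof (intro sum.cong refl)
    fix m assume m: "m \<in> Idx r d"
    have "1 \<le> fst p" using Idx_D[OF assms] by simp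
    then have "(1 < fst m \<and> p = (fst m - 1, snd m)) = (m = (fst p + 1, snd p))"
      by (cases p; cases m) auto
    then show "emul c (Xmat r d p m) (w m) = (if m = (fst p + 1, snd p) then w (fst p + 1, snd p) else 0)"
      using assms m by (auto simp: Xmat_def)
  qed
  also have "\<dots> = (if (fst p + 1, snd p) \<in> Idx r d then w (fst p + 1, snd p) else 0)"
    using finite_Idx by (simp add: sum.delta')
  finally show ?thesis .
qed

lemma uX_entry: "Y \<in> uX_pts r d \<Longrightarrow> Y p m \<noteq> 0 \<Longrightarrow> p \<in> Idx r d \<and> m \<in> Idx r d \<and> u_block m p"
  unfolding uX_pts_def using suppD by blast

lemma Ysum: assumes Y: "Y \<in> uX_pts r d" and ne: "(\<Sum>m\<in>Idx r d. emul c (Y p m) (esig (v m))) \<noteq> 0"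
    and v: "\<And>m. v m \<noteq> 0 \<Longrightarrow> m = (i,j,k) \<or> lt3 m (i,j,k)"
  shows "lt3 p (i - 1, j, k)"
proof -
  obtain m where "emul c (Y p m) (esig (v m)) \<noteq> 0" using ne by (auto dest: sum_nonzero_ex)
  then have a: "Y p m \<noteq> 0" and b: "v m \<noteq> 0" by auto
  from uX_entry[OF Y a] have u: "1 < fst m" "lt3 p (fst m - 1, snd m)" by (auto simp: u_block_lt3)
  from v[OF b] show ?thesis
  proof
    assume "m = (i,j,k)" then show ?thesis using u by simp
  next
    assume "lt3 m (i,j,k)"
    from lt3_shift[OF this u(1)] u(2) show ?thesis using lt3_trans by fastforce
  qed
qed

lemma fv_shape:
  assumes Y: "Y \<in> uX_pts r d" and jk: "(j,j,k) \<in> Idx r d" and s: "s < j"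
  shows "fv r d c Y s (j,k) (j - s, j, k) = eone
       \<and> (\<forall>p. fv r d c Y s (j,k) p \<noteq> 0 \<longrightarrow> p \<in> Idx r d \<and> (p = (j - s, j, k) \<or> lt3 p (j - s, j, k)))"
  using s
proof (induction s)
  case 0
  then show ?case using jk by (simp add: fv_0)
next
  case (Suc s)
  define v where "v = fv r d c Y s (j,k)"
  define i where "i = j - s"
  have i2: "2 \<le> i" using Suc.prems by (simp add: i_def)
  have ji: "j - Suc s = i - 1" by (simp add: i_def)
  have IHc: "v (i,j,k) = eone \<and> (\<forall>p. v p \<noteq> 0 \<longrightarrow> p \<in> Idx r d \<and> (p = (i,j,k) \<or> lt3 p (i,j,k)))"
    unfolding v_def i_def by (rule Suc.IH) (use Suc.prems in simp)
  then have IH: "v (i,j,k) = eone"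
    "\<And>p. v p \<noteq> 0 \<Longrightarrow> p \<in> Idx r d \<and> (p = (i,j,k) \<or> lt3 p (i,j,k))"
    by blast+
  have IH3: "\<And>m. v m \<noteq> 0 \<Longrightarrow> m = (i,j,k) \<or> lt3 m (i,j,k)" using IH(2) by blast
  have iIdx: "(i,j,k) \<in> Idx r d" using jk i2 by (auto simp: Idx_def i_def)
  have decomp: "fv r d c Y (Suc s) (j,k) p
      = (if (fst p + 1, snd p) \<in> Idx r d then esig (v (fst p + 1, snd p)) else 0)
        + (\<Sum>m\<in>Idx r d. emul c (Y p m) (esig (v m)))" if p: "p \<in> Idx r d" for p
    using p by (simp add: fv_Suc zap_def Zm_def emul_add_left sum.distrib Xsum v_def)
  have i1Idx: "(i - 1, j, k) \<in> Idx r d" using iIdx i2 by (auto simp: Idx_def)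
  have Y0: "(\<Sum>m\<in>Idx r d. emul c (Y p m) (esig (v m))) = 0" if "\<not> lt3 p (i - 1, j, k)" for p
    using Ysum[OF Y _ IH3] that by blast
  have "fv r d c Y (Suc s) (j,k) (i - 1, j, k) = eone"
    using decomp[OF i1Idx] Y0[of "(i - 1, j, k)"] i2 iIdx IH(1) lt3_irrefl by simp
  moreover have "p \<in> Idx r d \<and> (p = (i - 1, j, k) \<or> lt3 p (i - 1, j, k))"
    if ne: "fv r d c Y (Suc s) (j,k) p \<noteq> 0" for p
  proof -
    have p: "p \<in> Idx r d" using ne by (auto simp: fv_Suc zap_def split: if_splits)
    have "p = (i - 1, j, k) \<or> lt3 p (i - 1, j, k)"
    proof (rule ccontr)
      assume nn: "\<not> ?thesis"
      have "v (fst p + 1, snd p) = 0"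
      proof (rule ccontr)
        assume "v (fst p + 1, snd p) \<noteq> 0"
        from IH(2)[OF this] have "(fst p + 1, snd p) = (i,j,k) \<or> lt3 (fst p + 1, snd p) (i,j,k)" by blast
        then show False using nn i2 by (cases p) (auto simp: lt3_def)
      qed
      then show False using decomp[OF p] Y0[of p] nn ne by (auto split: if_splits)
    qed
    then show ?thesis using p by blast
  qed
  ultimately show ?case unfolding ji by blast
qed


lemma nn_col: assumes Y: "Y \<in> uX_pts r d" and q: "q = (i,j,k)" "q \<in> Idx r d"
  shows "(\<forall>p. nn r d c Y p q = fv r d c Y (j - i) (j,k) p)
       \<and> nn r d c Y q q = eone
       \<and> (\<forall>p. nn r d c Y p q \<noteq> 0 \<longrightarrow> p \<in> Idx r d \<and> (p = q \<or> lt3 p q))"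
proof -
  have jk: "(j,j,k) \<in> Idx r d" and ij: "1 \<le> i" "i \<le> j" using q by (auto simp: Idx_def)
  have s: "j - i < j" using ij by simp
  have e: "j - (j - i) = i" using ij by simp
  from fv_shape[OF Y jk s, of c] e
  have sh: "fv r d c Y (j - i) (j,k) (i, j, k) = eone"
     "\<forall>p. fv r d c Y (j - i) (j,k) p \<noteq> 0 \<longrightarrow> p \<in> Idx r d \<and> (p = (i, j, k) \<or> lt3 p (i, j, k))"
    by simp_all
  have col: "\<forall>p. nn r d c Y p q = fv r d c Y (j - i) (j,k) p" using q by (simp add: nn_def)
  show ?thesis using col sh q by auto
qed

lemma nn_N: assumes Y: "Y \<in> uX_pts r d" shows "nn r d c Y \<in> N_pts r d"
proof (rule N_intro)
  show "supp_ok r d (nn r d c Y)" unfolding supp_ok_def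
  proof (intro allI impI)
    fix p q :: "nat \<times> nat \<times> nat" assume h: "p \<notin> Idx r d \<or> q \<notin> Idx r d"
    show "nn r d c Y p q = 0"
    proof (cases "q \<in> Idx r d")
      case False then show ?thesis by (simp add: nn_def)
    next
      case True
      obtain i j k where "q = (i,j,k)" by (cases q)
      from nn_col[OF Y this True, of c] h True show ?thesis by blast
    qed
  qed
next
  fix p assume p: "p \<in> Idx r d"
  obtain i j k where "p = (i,j,k)" by (cases p)
  from nn_col[OF Y this p, of c] show "nn r d c Y p p = eone" by blast
next
  fix p q assume pq: "p \<in> Idx r d" "q \<in> Idx r d" "nn r d c Y p q \<noteq> 0"
  obtain i j k where "q = (i,j,k)" by (cases q)
  from nn_col[OF Y this pq(2), of c] pq(3) show "p = q \<or> lt3 p q" by blast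
qed

lemma supp_Zm: "Y \<in> uX_pts r d \<Longrightarrow> supp_ok r d (Zm r d Y)"
  unfolding Zm_def uX_pts_def supp_ok_def Xmat_def by auto

lemma nn_eq: assumes Y: "Y \<in> uX_pts r d"
  shows "mat_mul r d c (nn r d c Y) (Xmat r d) = mat_mul r d c (Zm r d Y) (mat_sig (nn r d c Y))"
proof (intro ext)
  fix p q
  show "mat_mul r d c (nn r d c Y) (Xmat r d) p q = mat_mul r d c (Zm r d Y) (mat_sig (nn r d c Y)) p q"
  proof (cases "p \<in> Idx r d \<and> q \<in> Idx r d")
    case False then show ?thesis by (auto simp: mat_mul_def)
  next
    case True
    obtain i j k where q: "q = (i,j,k)" by (cases q)
    have ij: "1 \<le> i" "i \<le> j" using q True by (auto simp: Idx_def)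
    note col = nn_col[OF Y q, of c]
    have colv: "\<And>p. nn r d c Y p q = fv r d c Y (j - i) (j,k) p" using col True by blast
    have "mat_mul r d c (Zm r d Y) (mat_sig (nn r d c Y)) p q
        = (\<Sum>m\<in>Idx r d. emul c (Zm r d Y p m) (esig (fv r d c Y (j - i) (j,k) m)))"
      using True by (simp add: mat_mul_def mat_sig_def colv)
    also have "\<dots> = fv r d c Y (Suc (j - i)) (j,k) p"
      using True by (simp add: fv_Suc zap_def)
    finally have R: "mat_mul r d c (Zm r d Y) (mat_sig (nn r d c Y)) p q = fv r d c Y (Suc (j - i)) (j,k) p" .
    have L: "mat_mul r d c (nn r d c Y) (Xmat r d) p q = (if 1 < i then nn r d c Y p (i - 1, j, k) else 0)"
      using mmX[of p r d q c "nn r d c Y"] True q by simp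
    show ?thesis
    proof (cases "1 < i")
      case True
      have q1: "(i - 1, j, k) \<in> Idx r d" using lminus_Idx[of q r d] True \<open>p \<in> Idx r d \<and> q \<in> Idx r d\<close> q by simp
      have "nn r d c Y p (i - 1, j, k) = fv r d c Y (j - (i - 1)) (j,k) p"
        using nn_col[OF Y refl q1, of c] by blast
      moreover have "j - (i - 1) = Suc (j - i)" using True ij by simp
      ultimately show ?thesis using L R True by simp
    next
      case False
      then have i1: "i = 1" using ij by simp
      have "fv r d c Y (Suc (j - i)) (j,k) p = (\<Sum>m\<in>Idx r d. emul c (Zm r d Y p m) (esig (fv r d c Y (j - i) (j,k) m)))"
        using True by (simp add: fv_Suc zap_def)
      also have "\<dots> = 0"
      proof (rule sum.neutral, intro ballI)
        fix m assume m: "m \<in> Idx r d"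
        show "emul c (Zm r d Y p m) (esig (fv r d c Y (j - i) (j,k) m)) = 0"
        proof (cases "fv r d c Y (j - i) (j,k) m = 0")
          case True then show ?thesis by simp
        next
          case False
          then have "nn r d c Y m q \<noteq> 0" using colv by simp
          then have "m = q \<or> lt3 m q" using col True by blast
          then have fm: "fst m = 1" using q i1 m Idx_D[OF m] by (auto simp: lt3_def)
          have "Xmat r d p m = 0" using fm by (simp add: Xmat_def)
          moreover have "Y p m = 0"
          proof (rule ccontr)
            assume "Y p m \<noteq> 0"
            from uX_entry[OF Y this] fm show False by (simp add: u_block_lt3)
          qed
          ultimately have "Zm r d Y p m = 0" by (simp add: Zm_def)
          then show ?thesis by simp
        qed
      qed
      finally show ?thesis using L R False by simp
    qed
  qed
qed

lemma part2: assumes Y: "Y \<in> uX_pts r d" shows "phi r d c (nn r d c Y) = Y"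
proof -
  let ?n = "nn r d c Y"
  have n: "?n \<in> N_pts r d" by (rule nn_N[OF Y])
  define g where "g = mat_inv r d c ?n"
  have g: "invp r d c ?n g" using N_inv[OF n] by (simp add: g_def)
  have "conj r d c ?n (Xmat r d) = mat_mul r d c (mat_mul r d c (Zm r d Y) (mat_sig ?n)) (mat_sig g)"
    by (simp add: conj_eq[OF g] nn_eq[OF Y])
  also have "\<dots> = mat_mul r d c (Zm r d Y) (mat_sig (mat_mul r d c ?n g))"
    by (simp add: mm_assoc sig_mm)
  also have "\<dots> = Zm r d Y" using g supp_Zm[OF Y] by (simp add: invp_def sig_one mm_one_right)
  finally show ?thesis by (simp add: phi_def mat_minus_def Zm_def)
qed

theorem lemma2p6p1:
  fixes \<delta> :: "'f::field_char_0" and \<iota> :: "'f \<Rightarrow> 'r::comm_ring_1"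
    and r :: nat and d :: "nat \<Rightarrow> nat"
  assumes "r \<ge> 1"
    and "\<not> (\<exists>x. x * x = \<delta>)"
    and "\<iota> 0 = 0" and "\<iota> 1 = 1"
    and "\<forall>a b. \<iota> (a + b) = \<iota> a + \<iota> b"
    and "\<forall>a b. \<iota> (a * b) = \<iota> a * \<iota> b"
  shows "(\<forall>n\<in>N_pts r d. phi r d (\<iota> \<delta>) n \<in> uX_pts r d)
       \<and> (\<forall>Y\<in>uX_pts r d. \<exists>n\<in>N_pts r d. phi r d (\<iota> \<delta>) n = Y)
       \<and> (\<forall>n\<in>N_pts r d. \<forall>n'\<in>N_pts r d.
            phi r d (\<iota> \<delta>) n = phi r d (\<iota> \<delta>) n'
              \<longleftrightarrow> (\<exists>m\<in>NX_pts r d (\<iota> \<delta>). n' = mat_mul r d (\<iota> \<delta>) n m))"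
  using part1 part2 nn_N part3 by blast

end
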